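(* Let $K\ge2$ and $\tilde a_1,\dots,\tilde a_K\in\mathbb{R}$ satisfy $\sum_{j=i}^K\tilde a_j>0$ for all $i\in\{1,\dots,K\}$. There are $t_0,D_3\in(0,\infty)$ such that for every $t\in[t_0,\infty)$, every admissible $n$ and every $\mathbf z\in G^n$, $$\mathbb{E}_{\mathbf z}|\hat{\mathbf Z}^n(|\mathbf z|t)|^2\le D_3\Big(t|\mathbf z|+\frac{1+t^2(|\mathbf z|^2+1)}{n}\Big).$$
   Context: Only integers $n>\max_l(\max(\tilde a_l,0))^2$ are considered. Let $A_1,\dots,A_K,D_1,\dots,D_K$ be mutually independent rate-one Poisson processes. The ranked queue-length process $\mathbf X^n=(X^n_1,\dots,X^n_K)'$ (with $X^n_1(0)\le\dots\le X^n_K(0)$ nonnegative integers) solves $$X^n_i(t)=X^n_i(0)+A_i\Big(n\int_0^t\alpha^n_i(s)\mathbf 1_{\{X^n_i(s)<X^n_{i+1}(s)\}}ds\Big)-D_i\Big(n\int_0^t\delta^n_i(s)\mathbf 1_{\{X^n_i(s)>X^n_{i-1}(s)\}}ds\Big),$$ with $X^n_0\equiv0$, $X^n_{K+1}\equiv\infty$, $\delta^n_i(t)=\sum_{j}\mathbf 1_{\{X^n_j(t)=X^n_i(t)\}}$, $\alpha^n_i(t)=\sum_j(1-\tilde a_jn^{-1/2})\mathbf 1_{\{X^n_j(t)=X^n_i(t)\}}$. The gap process $\hat{\mathbf Z}^n(t)=n^{-1/2}(X^n_1(t),X^n_2(t)-X^n_1(t),\dots,X^n_K(t)-X^n_{K-1}(t))'$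 is a Markov process on $G^n=n^{-1/2}\mathbb{N}_0^K$; $\mathbb{E}_{\mathbf z}$ denotes expectation when $\hat{\mathbf Z}^n(0)=\mathbf z$. $|\cdot|$ is the Euclidean norm. *)

theory Defs
  imports "HOL-Analysis.Analysis"
begin

text \<open>States of the ranked queue-length process X^n: functions x :: nat => nat,
  components x 1 <= ... <= x K, and x i = 0 outside {1..K} (so x 0 = 0 = X^n_0).\<close>
definition ranked_state :: "nat \<Rightarrow> (nat \<Rightarrow> nat) \<Rightarrow> bool" where
  "ranked_state K x \<longleftrightarrow> (\<forall>i. i \<notin> {1..K} \<longrightarrow> x i = 0) \<and> (\<forall>i\<in>{1..<K}. x i \<le> x (Suc i))"

definition alpha_rate :: "nat \<Rightarrow> (nat \<Rightarrow> real) \<Rightarrow> nat \<Rightarrow> (nat \<Rightarrow> nat) \<Rightarrow> nat \<Rightarrow> real" where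
  "alpha_rate K a n x i = (\<Sum>j\<in>{j\<in>{1..K}. x j = x i}. 1 - a j / sqrt (real n))"

definition delta_rate :: "nat \<Rightarrow> (nat \<Rightarrow> nat) \<Rightarrow> nat \<Rightarrow> real" where
  "delta_rate K x i = real (card {j\<in>{1..K}. x j = x i})"

text \<open>Jump intensities: X_i increases by one at rate n alpha_i 1{X_i < X_(i+1)} (X_(K+1) = infinity),
  decreases by one at rate n delta_i 1{X_i > X_(i-1)} (X_0 = 0).\<close>
definition up_rate :: "nat \<Rightarrow> (nat \<Rightarrow> real) \<Rightarrow> nat \<Rightarrow> (nat \<Rightarrow> nat) \<Rightarrow> nat \<Rightarrow> real" where
  "up_rate K a n x i = (if i = K \<or> x i < x (Suc i) then real n * alpha_rate K a n x i else 0)"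

definition down_rate :: "nat \<Rightarrow> nat \<Rightarrow> (nat \<Rightarrow> nat) \<Rightarrow> nat \<Rightarrow> real" where
  "down_rate K n x i = (if (if i = 1 then 0 else x (i - 1)) < x i then real n * delta_rate K x i else 0)"

definition generator :: "nat \<Rightarrow> (nat \<Rightarrow> real) \<Rightarrow> nat \<Rightarrow> ((nat \<Rightarrow> nat) \<Rightarrow> real) \<Rightarrow> (nat \<Rightarrow> nat) \<Rightarrow> real" where
  "generator K a n f x =
     (\<Sum>i=1..K. up_rate K a n x i * (f (x(i := Suc (x i))) - f x)
              + down_rate K n x i * (f (x(i := x i - 1)) - f x))"

text \<open>Uniformization constant: an upper bound of the total jump rate.\<close>
definition unif_rate :: "nat \<Rightarrow> (nat \<Rightarrow> real) \<Rightarrow> nat \<Rightarrow> real" where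
  "unif_rate K a n = real n * (2 * real K + (\<Sum>j=1..K. \<bar>a j\<bar>))"

definition jump_op :: "nat \<Rightarrow> (nat \<Rightarrow> real) \<Rightarrow> nat \<Rightarrow> ((nat \<Rightarrow> nat) \<Rightarrow> real) \<Rightarrow> (nat \<Rightarrow> nat) \<Rightarrow> real" where
  "jump_op K a n f x = f x + generator K a n f x / unif_rate K a n"

text \<open>Expectation E_x f(X^n(s)) for the chain started at x, via the transition semigroup
  (uniformization): sum_k e^(-Lambda s) (Lambda s)^k / k! (J^k f)(x).\<close>
definition expect_at :: "nat \<Rightarrow> (nat \<Rightarrow> real) \<Rightarrow> nat \<Rightarrow> (nat \<Rightarrow> nat) \<Rightarrow> real \<Rightarrow> ((nat \<Rightarrow> nat) \<Rightarrow> real) \<Rightarrow> real" where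
  "expect_at K a n x s f =
     (\<Sum>k. exp (- unif_rate K a n * s) * (unif_rate K a n * s) ^ k / fact k * (((jump_op K a n) ^^ k) f) x)"

definition zhat_normsq :: "nat \<Rightarrow> nat \<Rightarrow> (nat \<Rightarrow> nat) \<Rightarrow> real" where
  "zhat_normsq K n x = (\<Sum>i=1..K. (real (x i) - (if i = 1 then 0 else real (x (i - 1))))\<^sup>2) / real n"

definition admissible :: "nat \<Rightarrow> (nat \<Rightarrow> real) \<Rightarrow> nat \<Rightarrow> bool" where
  "admissible K a n \<longleftrightarrow> n \<ge> 1 \<and> (\<forall>l\<in>{1..K}. (max (a l) 0)\<^sup>2 < real n)"

end

theory Submission
  imports Defs
begin


lemma exp_sums_real: "(\<lambda>k. (l::real)^k / fact k) sums exp l"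
  using exp_converges[of l] by (simp add: divide_inverse mult.commute scaleR_conv_of_real)

lemma poi1: "(\<lambda>k. real k * (l::real)^k / fact k) sums (l * exp l)"
proof -
  have "(\<lambda>m. l * (l^m / fact m)) sums (l * exp l)" by (rule sums_mult[OF exp_sums_real])
  moreover have "(\<lambda>m. real (Suc m) * l^(Suc m) / fact (Suc m)) = (\<lambda>m. l * (l^m / fact m))"
    by (rule ext) (simp add: field_simps del: of_nat_Suc)
  ultimately have "(\<lambda>m. real (Suc m) * l^(Suc m) / fact (Suc m)) sums (l * exp l)" by simp
  then show ?thesis by (subst (asm) sums_Suc_iff) simp
qed

lemma poi2: "(\<lambda>k. real k * (real k - 1) * (l::real)^k / fact k) sums (l * (l * exp l))"
proof -
  have "(\<lambda>m. l * (real m * l^m / fact m)) sums (l * (l * exp l))" by (rule sums_mult[OF poi1])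
  moreover have "(\<lambda>m. real (Suc m) * (real (Suc m) - 1) * l^(Suc m) / fact (Suc m)) = (\<lambda>m. l * (real m * l^m / fact m))"
  proof (rule ext)
    fix m
    have f: "fact (Suc m) = real (Suc m) * (fact m :: real)" by simp
    have p: "real (Suc m) > 0" "(fact m :: real) > 0" by auto
    show "real (Suc m) * (real (Suc m) - 1) * l^(Suc m) / fact (Suc m) = l * (real m * l^m / fact m)"
    proof -
      have "real (Suc m) * (real (Suc m) - 1) * l^(Suc m) / fact (Suc m) = real (Suc m) * (real m * l^(Suc m)) / (real (Suc m) * fact m)"
        unfolding f by simp
      also have "\<dots> = real m * l^(Suc m) / fact m" using p(1) by (rule nonzero_mult_divide_mult_cancel_left[OF less_imp_neq[symmetric]])
      also have "\<dots> = l * (real m * l^m / fact m)" by simp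
      finally show ?thesis .
    qed
  qed
  ultimately have "(\<lambda>m. real (Suc m) * (real (Suc m) - 1) * l^(Suc m) / fact (Suc m)) sums (l * (l * exp l))" by simp
  then show ?thesis by (subst (asm) sums_Suc_iff) simp
qed

lemma poisson_moment:
  "(\<lambda>k. exp (-l) * (l::real)^k / fact k * (A * (real k - l)^2 + B * real k + C)) sums (A*l + B*l + C)"
proof -
  have s: "(\<lambda>k. A * (real k * (real k - 1) * l^k / fact k) + ((A + B - 2*A*l) * (real k * l^k / fact k)
       + (A*l^2 + C) * (l^k / fact k))) sums (A * (l * (l * exp l)) + ((A + B - 2*A*l) * (l * exp l) + (A*l^2+C) * exp l))"
    by (intro sums_add sums_mult poi1 poi2 exp_sums_real)
  have s2: "(\<lambda>k. exp (-l) * (A * (real k * (real k - 1) * l^k / fact k) + ((A + B - 2*A*l) * (real k * l^k / fact k)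
       + (A*l^2 + C) * (l^k / fact k)))) sums (exp (-l) * (A * (l * (l * exp l)) + ((A + B - 2*A*l) * (l * exp l) + (A*l^2+C) * exp l)))"
    by (rule sums_mult[OF s])
  have e: "exp (-l) * exp l = 1" by (simp add: exp_minus field_simps)
  have "exp (-l) * (A * (l * (l * exp l)) + ((A + B - 2*A*l) * (l * exp l) + (A*l^2+C) * exp l)) = A*l + B*l + C"
    using e by (simp add: algebra_simps power2_eq_square)
  moreover have "(\<lambda>k. exp (-l) * (A * (real k * (real k - 1) * l^k / fact k) + ((A + B - 2*A*l) * (real k * l^k / fact k)
       + (A*l^2 + C) * (l^k / fact k)))) = (\<lambda>k. exp (-l) * l^k / fact k * (A * (real k - l)^2 + B * real k + C))"
    by (rule ext) (simp add: field_simps power2_eq_square)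
  ultimately show ?thesis using s2 by simp
qed


definition gsq :: "nat \<Rightarrow> (nat \<Rightarrow> nat) \<Rightarrow> real" where
  "gsq K x = (\<Sum>i=1..K. (real (x i))\<^sup>2)"

definition tot_rate :: "nat \<Rightarrow> (nat \<Rightarrow> real) \<Rightarrow> nat \<Rightarrow> (nat \<Rightarrow> nat) \<Rightarrow> real" where
  "tot_rate K a n x = (\<Sum>i=1..K. up_rate K a n x i + down_rate K n x i)"

definition top_idx :: "nat \<Rightarrow> (nat \<Rightarrow> nat) \<Rightarrow> nat \<Rightarrow> bool" where
  "top_idx K x i \<longleftrightarrow> (i = K \<or> x i < x (Suc i))"

definition bot_idx :: "(nat \<Rightarrow> nat) \<Rightarrow> nat \<Rightarrow> bool" where
  "bot_idx x i \<longleftrightarrow> (i = 1 \<or> x (i - 1) < x i)"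

definition dd :: "(nat \<Rightarrow> nat) \<Rightarrow> nat \<Rightarrow> real" where
  "dd x i = real (x i) - (if i = 1 then 0 else real (x (i - 1)))"

lemma ranked_zero: "ranked_state K x \<Longrightarrow> x 0 = 0"
  unfolding ranked_state_def by auto

lemma ranked_mono_aux: "ranked_state K x \<Longrightarrow> 1 \<le> i \<Longrightarrow> i + d \<le> K \<Longrightarrow> x i \<le> x (i + d)"
proof (induction d)
  case 0 then show ?case by simp
next
  case (Suc d)
  then have "x i \<le> x (i + d)" by simp
  moreover have "x (i + d) \<le> x (Suc (i + d))"
    using Suc.prems unfolding ranked_state_def by auto
  ultimately show ?case by simp
qed

lemma ranked_mono: "ranked_state K x \<Longrightarrow> 1 \<le> i \<Longrightarrow> i \<le> j \<Longrightarrow> j \<le> K \<Longrightarrow> x i \<le> x j"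
  using ranked_mono_aux[of K x i "j - i"] by simp

lemma class_sum:
  fixes G :: "nat \<Rightarrow> real"
  assumes uniq: "\<And>j. j \<in> {1..K} \<Longrightarrow> \<exists>!i. i \<in> {1..K} \<and> P i \<and> x i = x j"
  shows "(\<Sum>i=1..K. if P i then (\<Sum>j\<in>{j\<in>{1..K}. x j = x i}. G j) else 0) = (\<Sum>j=1..K. G j)"
proof -
  have step1: "(if P i then (\<Sum>j\<in>{j\<in>{1..K}. x j = x i}. G j) else 0) = (\<Sum>j=1..K. if P i \<and> x j = x i then G j else 0)" for i
  proof -
    have "(\<Sum>j\<in>{j\<in>{1..K}. x j = x i}. G j) = (\<Sum>j=1..K. if x j = x i then G j else 0)"
      by (rule sum.inter_filter) simp
    then show ?thesis by (cases "P i") simp_all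
  qed
  have step3: "(\<Sum>i=1..K. if P i \<and> x j = x i then G j else 0) = G j" if j: "j \<in> {1..K}" for j
  proof -
    from uniq[OF j] obtain i0 where i0: "i0 \<in> {1..K}" "P i0" "x i0 = x j"
      and u: "\<And>i. i \<in> {1..K} \<and> P i \<and> x i = x j \<Longrightarrow> i = i0" by blast
    have eq: "(P i \<and> x j = x i) \<longleftrightarrow> i = i0" if "i \<in> {1..K}" for i
      using u[of i] i0 that by auto
    have "(\<Sum>i=1..K. if P i \<and> x j = x i then G j else 0) = (\<Sum>i=1..K. if i = i0 then G j else 0)"
      by (rule sum.cong[OF refl]) (simp only: eq)
    also have "\<dots> = G j" using i0(1) by (simp add: sum.delta)
    finally show ?thesis .
  qed
  have "(\<Sum>i=1..K. if P i then (\<Sum>j\<in>{j\<in>{1..K}. x j = x i}. G j) else 0)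
      = (\<Sum>i=1..K. \<Sum>j=1..K. if P i \<and> x j = x i then G j else 0)"
    by (simp only: step1)
  also have "\<dots> = (\<Sum>j=1..K. \<Sum>i=1..K. if P i \<and> x j = x i then G j else 0)"
    by (rule sum.swap)
  also have "\<dots> = (\<Sum>j=1..K. G j)"
    by (rule sum.cong[OF refl]) (rule step3)
  finally show ?thesis .
qed

lemma top_unique:
  assumes r: "ranked_state K x" and j: "j \<in> {1..K}"
  shows "\<exists>!i. i \<in> {1..K} \<and> top_idx K x i \<and> x i = x j"
proof -
  let ?I = "{i\<in>{1..K}. x i = x j}"
  have fin: "finite ?I" by simp
  have ne: "j \<in> ?I" using j by simp
  define i0 where "i0 = Max ?I"
  have i0I: "i0 \<in> ?I" unfolding i0_def using fin ne using Max_in[OF fin] by blast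
  have i0max: "\<And>i. i \<in> ?I \<Longrightarrow> i \<le> i0" unfolding i0_def using fin by simp
  have top0: "top_idx K x i0"
  proof (cases "i0 = K")
    case True then show ?thesis by (simp add: top_idx_def)
  next
    case False
    then have "Suc i0 \<in> {1..K}" using i0I by auto
    moreover have "x i0 \<le> x (Suc i0)" using ranked_mono[OF r, of i0 "Suc i0"] i0I False by auto
    ultimately have "x i0 < x (Suc i0)" using i0max[of "Suc i0"] i0I by force
    then show ?thesis by (simp add: top_idx_def)
  qed
  show ?thesis
  proof (rule ex1I[of _ i0])
    show "i0 \<in> {1..K} \<and> top_idx K x i0 \<and> x i0 = x j" using i0I top0 by simp
  next
    fix i assume h: "i \<in> {1..K} \<and> top_idx K x i \<and> x i = x j"
    have "i \<le> i0" using h i0max by simp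
    moreover have "\<not> i < i0"
    proof
      assume lt: "i < i0"
      then have "i \<noteq> K" using i0I by auto
      then have "x i < x (Suc i)" using h by (simp add: top_idx_def)
      moreover have "x (Suc i) \<le> x i0" using ranked_mono[OF r, of "Suc i" i0] lt i0I by auto
      ultimately show False using h i0I by simp
    qed
    ultimately show "i = i0" by simp
  qed
qed

lemma bot_unique:
  assumes r: "ranked_state K x" and j: "j \<in> {1..K}"
  shows "\<exists>!i. i \<in> {1..K} \<and> bot_idx x i \<and> x i = x j"
proof -
  let ?I = "{i\<in>{1..K}. x i = x j}"
  have fin: "finite ?I" by simp
  have ne: "j \<in> ?I" using j by simp
  define i0 where "i0 = Min ?I"
  have i0I: "i0 \<in> ?I" unfolding i0_def using fin ne using Min_in[OF fin] by blast
  have i0min: "\<And>i. i \<in> ?I \<Longrightarrow> i0 \<le> i" unfolding i0_def using fin by simp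
  have bot0: "bot_idx x i0"
  proof (cases "i0 = 1")
    case True then show ?thesis by (simp add: bot_idx_def)
  next
    case False
    then have "i0 - 1 \<in> {1..K}" using i0I by auto
    moreover have "x (i0 - 1) \<le> x i0" using ranked_mono[OF r, of "i0 - 1" i0] i0I False by auto
    moreover have "\<not> i0 \<le> i0 - 1" using False i0I by auto
    ultimately have "x (i0 - 1) < x i0" using i0min[of "i0 - 1"] i0I by force
    then show ?thesis by (simp add: bot_idx_def)
  qed
  show ?thesis
  proof (rule ex1I[of _ i0])
    show "i0 \<in> {1..K} \<and> bot_idx x i0 \<and> x i0 = x j" using i0I bot0 by simp
  next
    fix i assume h: "i \<in> {1..K} \<and> bot_idx x i \<and> x i = x j"
    have "i0 \<le> i" using h i0min by simp
    moreover have "\<not> i0 < i"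
    proof
      assume lt: "i0 < i"
      then have "i \<noteq> 1" using i0I by auto
      then have "x (i - 1) < x i" using h by (simp add: bot_idx_def)
      moreover have "x i0 \<le> x (i - 1)" using ranked_mono[OF r, of i0 "i - 1"] lt i0I h by auto
      ultimately show False using h i0I by simp
    qed
    ultimately show "i = i0" by simp
  qed
qed

lemma up_sum:
  assumes r: "ranked_state K x"
  shows "(\<Sum>i=1..K. up_rate K a n x i * F (x i)) = real n * (\<Sum>j=1..K. (1 - a j / sqrt (real n)) * F (x j))"
proof -
  have "(\<Sum>i=1..K. up_rate K a n x i * F (x i))
     = (\<Sum>i=1..K. if top_idx K x i then (\<Sum>j\<in>{j\<in>{1..K}. x j = x i}. real n * ((1 - a j / sqrt (real n)) * F (x j))) else 0)"
  proof (rule sum.cong)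
    fix i assume i: "i \<in> {1..K}"
    have "alpha_rate K a n x i * F (x i) = (\<Sum>j\<in>{j\<in>{1..K}. x j = x i}. (1 - a j / sqrt (real n)) * F (x j))"
      unfolding alpha_rate_def sum_distrib_right by (rule sum.cong) auto
    then show "up_rate K a n x i * F (x i) = (if top_idx K x i then (\<Sum>j\<in>{j\<in>{1..K}. x j = x i}. real n * ((1 - a j / sqrt (real n)) * F (x j))) else 0)"
      unfolding up_rate_def top_idx_def by (simp add: sum_distrib_left[symmetric] mult.assoc)
  qed simp
  also have "\<dots> = (\<Sum>j=1..K. real n * ((1 - a j / sqrt (real n)) * F (x j)))"
    by (rule class_sum) (rule top_unique[OF r])
  finally show ?thesis by (simp add: sum_distrib_left)
qed

lemma down_sum:
  assumes r: "ranked_state K x"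
  shows "(\<Sum>i=1..K. down_rate K n x i * F (x i)) = real n * (\<Sum>j=1..K. if 0 < x j then F (x j) else 0)"
proof -
  have "(\<Sum>i=1..K. down_rate K n x i * F (x i))
     = (\<Sum>i=1..K. if bot_idx x i then (\<Sum>j\<in>{j\<in>{1..K}. x j = x i}. real n * (if 0 < x j then F (x j) else 0)) else 0)"
  proof (rule sum.cong)
    fix i assume i: "i \<in> {1..K}"
    have cond: "((if i = 1 then 0 else x (i - 1)) < x i) \<longleftrightarrow> bot_idx x i \<and> 0 < x i"
      unfolding bot_idx_def by auto
    have "(\<Sum>j\<in>{j\<in>{1..K}. x j = x i}. real n * (if 0 < x j then F (x j) else 0))
        = (\<Sum>j\<in>{j\<in>{1..K}. x j = x i}. real n * (if 0 < x i then F (x i) else 0))"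
      by (rule sum.cong) auto
    also have "\<dots> = real (card {j\<in>{1..K}. x j = x i}) * (real n * (if 0 < x i then F (x i) else 0))"
      by simp
    finally have e: "(\<Sum>j\<in>{j\<in>{1..K}. x j = x i}. real n * (if 0 < x j then F (x j) else 0))
        = real (card {j\<in>{1..K}. x j = x i}) * (real n * (if 0 < x i then F (x i) else 0))" .
    show "down_rate K n x i * F (x i) = (if bot_idx x i then (\<Sum>j\<in>{j\<in>{1..K}. x j = x i}. real n * (if 0 < x j then F (x j) else 0)) else 0)"
      unfolding e down_rate_def delta_rate_def cond by auto
  qed simp
  also have "\<dots> = (\<Sum>j=1..K. real n * (if 0 < x j then F (x j) else 0))"
    by (rule class_sum) (rule bot_unique[OF r])
  finally show ?thesis by (simp add: sum_distrib_left)
qed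

lemma sqrt_n_ge1: "admissible K a n \<Longrightarrow> 1 \<le> sqrt (real n)"
  unfolding admissible_def by simp

lemma a_lt_sqrt: "admissible K a n \<Longrightarrow> j \<in> {1..K} \<Longrightarrow> a j < sqrt (real n)"
proof -
  assume adm: "admissible K a n" and j: "j \<in> {1..K}"
  then have "(max (a j) 0)\<^sup>2 < real n" unfolding admissible_def by auto
  then have "max (a j) 0 < sqrt (real n)" by (rule real_less_rsqrt)
  then show ?thesis by simp
qed

lemma up_nonneg: "admissible K a n \<Longrightarrow> 0 \<le> up_rate K a n x i"
proof -
  assume adm: "admissible K a n"
  have "0 \<le> alpha_rate K a n x i"
    unfolding alpha_rate_def
  proof (rule sum_nonneg)
    fix j assume "j \<in> {j\<in>{1..K}. x j = x i}"
    then have "a j < sqrt (real n)" using a_lt_sqrt[OF adm] by auto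
    moreover have "0 < sqrt (real n)" using sqrt_n_ge1[OF adm] by simp
    ultimately show "0 \<le> 1 - a j / sqrt (real n)" by (simp add: field_simps)
  qed
  then show ?thesis unfolding up_rate_def by simp
qed

lemma down_nonneg: "0 \<le> down_rate K n x i"
  unfolding down_rate_def delta_rate_def by simp

lemma tot_rate_le:
  assumes adm: "admissible K a n" and r: "ranked_state K x"
  shows "tot_rate K a n x \<le> unif_rate K a n"
proof -
  have sn: "1 \<le> sqrt (real n)" by (rule sqrt_n_ge1[OF adm])
  have u: "(\<Sum>i=1..K. up_rate K a n x i) = real n * (\<Sum>j=1..K. (1 - a j / sqrt (real n)))"
    using up_sum[OF r, of a n "\<lambda>_. 1"] by simp
  have d: "(\<Sum>i=1..K. down_rate K n x i) = real n * (\<Sum>j=1..K. if 0 < x j then 1 else 0)"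
    using down_sum[OF r, of n "\<lambda>_. 1"] by simp
  have "tot_rate K a n x = real n * (\<Sum>j=1..K. (1 - a j / sqrt (real n))) + real n * (\<Sum>j=1..K. if 0 < x j then 1 else 0)"
    unfolding tot_rate_def sum.distrib u d ..
  also have "\<dots> \<le> real n * (\<Sum>j=1..K. (1 + \<bar>a j\<bar>)) + real n * (\<Sum>j=1..K. 1)"
  proof (intro add_mono mult_left_mono sum_mono)
    fix j
    have "- a j / sqrt (real n) \<le> \<bar>a j\<bar> / sqrt (real n)" by (rule divide_right_mono) auto
    also have "\<dots> \<le> \<bar>a j\<bar>" using sn mult_left_mono[of 1 "sqrt (real n)" "\<bar>a j\<bar>"] by (simp add: divide_le_eq)
    finally show "1 - a j / sqrt (real n) \<le> 1 + \<bar>a j\<bar>" by simp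
  qed auto
  also have "\<dots> = unif_rate K a n" unfolding unif_rate_def by (simp add: sum.distrib algebra_simps)
  finally show ?thesis .
qed

lemma gsq_upd:
  assumes i: "i \<in> {1..K}"
  shows "gsq K (x(i := v)) = gsq K x - (real (x i))\<^sup>2 + (real v)\<^sup>2"
proof -
  have fin: "finite {1..K}" by simp
  have a1: "gsq K (x(i := v)) = (real v)\<^sup>2 + (\<Sum>j\<in>{1..K} - {i}. (real ((x(i := v)) j))\<^sup>2)"
    unfolding gsq_def using sum.remove[OF fin i, of "\<lambda>j. (real ((x(i := v)) j))\<^sup>2"] by simp
  have a2: "gsq K x = (real (x i))\<^sup>2 + (\<Sum>j\<in>{1..K} - {i}. (real (x j))\<^sup>2)"
    unfolding gsq_def using sum.remove[OF fin i] by simp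
  have "(\<Sum>j\<in>{1..K} - {i}. (real ((x(i := v)) j))\<^sup>2) = (\<Sum>j\<in>{1..K} - {i}. (real (x j))\<^sup>2)"
    by (rule sum.cong) auto
  then show ?thesis using a1 a2 by simp
qed

lemma gen_gsq:
  assumes r: "ranked_state K x"
  shows "generator K a n (gsq K) x = real n * (\<Sum>j=1..K. (1 - a j / sqrt (real n)) * (2 * real (x j) + 1))
          + real n * (\<Sum>j=1..K. if 0 < x j then 1 - 2 * real (x j) else 0)"
proof -
  have "generator K a n (gsq K) x = (\<Sum>i=1..K. up_rate K a n x i * (\<lambda>v. 2 * real v + 1) (x i))
      + (\<Sum>i=1..K. down_rate K n x i * (\<lambda>v. 1 - 2 * real v) (x i))"
    unfolding generator_def sum.distrib[symmetric]
  proof (rule sum.cong)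
    fix i assume i: "i \<in> {1..K}"
    have u: "gsq K (x(i := Suc (x i))) - gsq K x = 2 * real (x i) + 1"
      unfolding gsq_upd[OF i] by (simp add: power2_eq_square algebra_simps)
    have d: "down_rate K n x i * (gsq K (x(i := x i - 1)) - gsq K x) = down_rate K n x i * (1 - 2 * real (x i))"
    proof (cases "0 < x i")
      case True
      then have "real (x i - 1) = real (x i) - 1" by (simp add: of_nat_diff)
      then show ?thesis unfolding gsq_upd[OF i] by (simp add: power2_eq_square algebra_simps)
    next
      case False
      then have "down_rate K n x i = 0" unfolding down_rate_def by auto
      then show ?thesis by simp
    qed
    show "up_rate K a n x i * (gsq K (x(i := Suc (x i))) - gsq K x) + down_rate K n x i * (gsq K (x(i := x i - 1)) - gsq K x)
        = up_rate K a n x i * (\<lambda>v. 2 * real v + 1) (x i) + down_rate K n x i * (\<lambda>v. 1 - 2 * real v) (x i)"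
      using u d by simp
  qed simp
  also have "\<dots> = real n * (\<Sum>j=1..K. (1 - a j / sqrt (real n)) * (2 * real (x j) + 1))
          + real n * (\<Sum>j=1..K. if 0 < x j then 1 - 2 * real (x j) else 0)"
    using up_sum[OF r, of a n "\<lambda>v. 2 * real v + 1"] down_sum[OF r, of n "\<lambda>v. 1 - 2 * real v"] by simp
  finally show ?thesis .
qed

lemma Qg_bound:
  assumes adm: "admissible K a n" and r: "ranked_state K x"
  shows "generator K a n (gsq K) x \<le> - 2 * sqrt (real n) * (\<Sum>j=1..K. a j * real (x j)) + unif_rate K a n"
proof -
  define sn where "sn = sqrt (real n)"
  have sn1: "1 \<le> sn" unfolding sn_def by (rule sqrt_n_ge1[OF adm])
  have nsn: "real n = sn * sn" unfolding sn_def by simp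
  have per: "real n * ((1 - a j / sn) * (2 * real (x j) + 1)) + real n * (if 0 < x j then 1 - 2 * real (x j) else 0)
      \<le> 2 * real n + real n * \<bar>a j\<bar> - 2 * sn * (a j * real (x j))" for j
  proof -
    have e1: "real n * ((1 - a j / sn) * (2 * real (x j) + 1)) = sn * sn * (2 * real (x j) + 1) - sn * a j * (2 * real (x j) + 1)"
      unfolding nsn using sn1 by (simp add: field_simps)
    have e2: "real n * (if 0 < x j then 1 - 2 * real (x j) else 0) \<le> sn * sn * (1 - 2 * real (x j))"
      unfolding nsn by auto
    have e3: "- sn * a j \<le> sn * sn * \<bar>a j\<bar>"
    proof -
      have "- sn * a j = sn * (- a j)" by simp
      also have "\<dots> \<le> sn * \<bar>a j\<bar>" by (rule mult_left_mono) (use sn1 in auto)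
      also have "\<dots> \<le> sn * sn * \<bar>a j\<bar>" using sn1 by (simp add: mult_right_mono)
      finally show ?thesis .
    qed
    show ?thesis using e1 e2 e3 unfolding nsn by (simp add: algebra_simps)
  qed
  have "generator K a n (gsq K) x \<le> (\<Sum>j=1..K. 2 * real n + real n * \<bar>a j\<bar> - 2 * sn * (a j * real (x j)))"
    unfolding gen_gsq[OF r] sum_distrib_left sum.distrib[symmetric] sn_def[symmetric]
    by (rule sum_mono) (rule per)
  also have "\<dots> = (\<Sum>j=1..K. 2 * real n + real n * \<bar>a j\<bar>) - 2 * sn * (\<Sum>j=1..K. a j * real (x j))"
    by (simp add: sum_subtractf sum_distrib_left)
  also have "(\<Sum>j=1..K. 2 * real n + real n * \<bar>a j\<bar>) = unif_rate K a n"
    unfolding unif_rate_def by (simp add: sum.distrib sum_distrib_left algebra_simps)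
  also have "unif_rate K a n - 2 * sn * (\<Sum>j=1..K. a j * real (x j)) = - 2 * sqrt (real n) * (\<Sum>j=1..K. a j * real (x j)) + unif_rate K a n"
    unfolding sn_def by simp
  finally show ?thesis .
qed

lemma telescope_dd: "x 0 = 0 \<Longrightarrow> (\<Sum>i=1..m. dd x i) = real (x m)"
proof (induction m)
  case 0 then show ?case by simp
next
  case (Suc m)
  then show ?case by (cases "m = 0") (simp_all add: dd_def)
qed

lemma abel: "x 0 = 0 \<Longrightarrow> (\<Sum>j=1..m. a j * real (x j)) = (\<Sum>i=1..m. (\<Sum>j=i..m. a j) * dd x i)"
proof (induction m)
  case 0 then show ?case by simp
next
  case (Suc m)
  have "(\<Sum>i=1..Suc m. (\<Sum>j=i..Suc m. a j) * dd x i)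
      = (\<Sum>i=1..m. (\<Sum>j=i..Suc m. a j) * dd x i) + a (Suc m) * dd x (Suc m)" by simp
  also have "(\<Sum>i=1..m. (\<Sum>j=i..Suc m. a j) * dd x i) = (\<Sum>i=1..m. (\<Sum>j=i..m. a j) * dd x i + a (Suc m) * dd x i)"
    by (rule sum.cong) (auto simp: algebra_simps)
  also have "\<dots> = (\<Sum>j=1..m. a j * real (x j)) + a (Suc m) * (\<Sum>i=1..m. dd x i)"
    using Suc by (simp add: sum.distrib sum_distrib_left)
  finally have "(\<Sum>i=1..Suc m. (\<Sum>j=i..Suc m. a j) * dd x i) = (\<Sum>j=1..m. a j * real (x j)) + a (Suc m) * ((\<Sum>i=1..m. dd x i) + dd x (Suc m))"
    by (simp add: algebra_simps)
  also have "(\<Sum>i=1..m. dd x i) + dd x (Suc m) = real (x (Suc m))"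
    using telescope_dd[of x "Suc m"] Suc.prems by simp
  finally show ?case by simp
qed

lemma dd_nonneg: "ranked_state K x \<Longrightarrow> i \<in> {1..K} \<Longrightarrow> 0 \<le> dd x i"
  unfolding dd_def using ranked_mono[of K x "i - 1" i] by auto

lemma dd_le: "ranked_state K x \<Longrightarrow> i \<in> {1..K} \<Longrightarrow> dd x i \<le> real (x i)"
  unfolding dd_def by auto

lemma drift_lower:
  assumes r: "ranked_state K x" and al: "\<And>i. i \<in> {1..K} \<Longrightarrow> \<alpha> \<le> (\<Sum>j=i..K. a j)"
  shows "\<alpha> * real (x K) \<le> (\<Sum>j=1..K. a j * real (x j))"
proof -
  have x0: "x 0 = 0" by (rule ranked_zero[OF r])
  have "(\<Sum>i=1..K. \<alpha> * dd x i) = \<alpha> * (\<Sum>i=1..K. dd x i)" by (rule sum_distrib_left[symmetric])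
  then have "\<alpha> * real (x K) = (\<Sum>i=1..K. \<alpha> * dd x i)" using telescope_dd[of x K, OF x0] by simp
  also have "\<dots> \<le> (\<Sum>i=1..K. (\<Sum>j=i..K. a j) * dd x i)"
    by (rule sum_mono) (rule mult_right_mono[OF al dd_nonneg[OF r]])
  also have "\<dots> = (\<Sum>j=1..K. a j * real (x j))" using abel[of x, OF x0] by simp
  finally show ?thesis .
qed



lemma unif_pos: "admissible K a n \<Longrightarrow> 1 \<le> K \<Longrightarrow> 0 < unif_rate K a n"
proof -
  assume adm: "admissible K a n" and K: "1 \<le> K"
  have "0 \<le> (\<Sum>j=1..K. \<bar>a j\<bar>)" by (rule sum_nonneg) simp
  moreover have "1 \<le> real n" using adm unfolding admissible_def by simp
  ultimately show ?thesis unfolding unif_rate_def using K by (simp add: add_pos_nonneg)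
qed

lemma gen_affine: "generator K a n (\<lambda>y. c * h y + e) x = c * generator K a n h x"
  unfolding generator_def sum_distrib_left by (rule sum.cong) (auto simp: algebra_simps)

lemma J_affine: "jump_op K a n (\<lambda>y. c * h y + e) x = c * jump_op K a n h x + e"
  unfolding jump_op_def gen_affine by (simp add: algebra_simps)

lemma gen_diff: "generator K a n (\<lambda>y. h2 y - h1 y) x = generator K a n h2 x - generator K a n h1 x"
  unfolding generator_def sum_subtractf[symmetric] by (rule sum.cong) (auto simp: algebra_simps)

lemma gen_zero: "generator K a n (\<lambda>y. 0) x = 0"
  unfolding generator_def by simp

lemma up_ranked:
  assumes r: "ranked_state K x" and i: "i \<in> {1..K}" and nz: "up_rate K a n x i \<noteq> 0"
  shows "ranked_state K (x(i := Suc (x i)))"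
proof -
  have top: "i = K \<or> x i < x (Suc i)" using nz unfolding up_rate_def by (auto split: if_splits)
  show ?thesis unfolding ranked_state_def
  proof (intro conjI ballI allI impI)
    fix l assume "l \<notin> {1..K}" then show "(x(i := Suc (x i))) l = 0" using r i unfolding ranked_state_def by auto
  next
    fix l assume l: "l \<in> {1..<K}"
    have s: "x l \<le> x (Suc l)" using r l unfolding ranked_state_def by auto
    show "(x(i := Suc (x i))) l \<le> (x(i := Suc (x i))) (Suc l)"
      using s top l by auto
  qed
qed

lemma down_ranked:
  assumes r: "ranked_state K x" and i: "i \<in> {1..K}" and nz: "down_rate K n x i \<noteq> 0"
  shows "ranked_state K (x(i := x i - 1))"
proof -
  have bot: "(if i = 1 then 0 else x (i - 1)) < x i" using nz unfolding down_rate_def by (auto split: if_splits)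
  show ?thesis unfolding ranked_state_def
  proof (intro conjI ballI allI impI)
    fix l assume "l \<notin> {1..K}" then show "(x(i := x i - 1)) l = 0" using r i unfolding ranked_state_def by auto
  next
    fix l assume l: "l \<in> {1..<K}"
    have s: "x l \<le> x (Suc l)" using r l unfolding ranked_state_def by auto
    show "(x(i := x i - 1)) l \<le> (x(i := x i - 1)) (Suc l)"
    proof (cases "Suc l = i")
      case True
      then have "x l < x i" using bot l by (auto split: if_splits)
      then show ?thesis using True by auto
    next
      case False
      then show ?thesis using s by auto
    qed
  qed
qed

lemma gen_lower:
  assumes adm: "admissible K a n" and r: "ranked_state K x"
    and nn: "\<And>y. ranked_state K y \<Longrightarrow> 0 \<le> \<delta> y"
  shows "- tot_rate K a n x * \<delta> x \<le> generator K a n \<delta> x"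
proof -
  have e: "- tot_rate K a n x * \<delta> x = (\<Sum>i=1..K. - ((up_rate K a n x i + down_rate K n x i) * \<delta> x))"
    unfolding tot_rate_def by (simp add: sum_negf sum_distrib_right)
  show ?thesis unfolding e generator_def
  proof (rule sum_mono)
  fix i assume i: "i \<in> {1..K}"
  have u: "0 \<le> up_rate K a n x i * \<delta> (x(i := Suc (x i)))"
  proof (cases "up_rate K a n x i = 0")
    case False
    then show ?thesis using up_nonneg[OF adm] nn[OF up_ranked[OF r i False]] by simp
  qed simp
  have d: "0 \<le> down_rate K n x i * \<delta> (x(i := x i - 1))"
  proof (cases "down_rate K n x i = 0")
    case False
    then show ?thesis using down_nonneg nn[OF down_ranked[OF r i False]] by simp
  qed simp
  show "- ((up_rate K a n x i + down_rate K n x i) * \<delta> x)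
        \<le> up_rate K a n x i * (\<delta> (x(i := Suc (x i))) - \<delta> x) + down_rate K n x i * (\<delta> (x(i := x i - 1)) - \<delta> x)"
    using u d by (simp add: algebra_simps)
  qed
qed

lemma tot_nonneg: "admissible K a n \<Longrightarrow> 0 \<le> tot_rate K a n x"
  unfolding tot_rate_def by (rule sum_nonneg) (simp add: up_nonneg down_nonneg)

lemma J_mono:
  assumes adm: "admissible K a n" and K: "1 \<le> K" and r: "ranked_state K x"
    and le: "\<And>y. ranked_state K y \<Longrightarrow> h1 y \<le> h2 y"
  shows "jump_op K a n h1 x \<le> jump_op K a n h2 x"
proof -
  define \<delta> where "\<delta> = (\<lambda>y. h2 y - h1 y)"
  have L: "0 < unif_rate K a n" by (rule unif_pos[OF adm K])
  have g: "- tot_rate K a n x * \<delta> x \<le> generator K a n \<delta> x"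
    by (rule gen_lower[OF adm r]) (simp add: \<delta>_def le)
  have t: "tot_rate K a n x \<le> unif_rate K a n" by (rule tot_rate_le[OF adm r])
  have d0: "0 \<le> \<delta> x" using le[OF r] by (simp add: \<delta>_def)
  have "tot_rate K a n x * \<delta> x \<le> unif_rate K a n * \<delta> x" by (rule mult_right_mono[OF t d0])
  then have "- unif_rate K a n * \<delta> x \<le> generator K a n \<delta> x" using g by simp
  then have "- \<delta> x \<le> generator K a n \<delta> x / unif_rate K a n" using L by (simp add: field_simps)
  moreover have "generator K a n \<delta> x = generator K a n h2 x - generator K a n h1 x"
    unfolding \<delta>_def by (rule gen_diff)
  ultimately show ?thesis unfolding jump_op_def \<delta>_def using L by (simp add: diff_divide_distrib)
qed

lemma Jpow_mono:
  assumes adm: "admissible K a n" and K: "1 \<le> K"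
    and le: "\<And>y. ranked_state K y \<Longrightarrow> h1 y \<le> h2 y"
  shows "ranked_state K x \<Longrightarrow> ((jump_op K a n)^^k) h1 x \<le> ((jump_op K a n)^^k) h2 x"
proof (induction k arbitrary: x)
  case 0 then show ?case using le by simp
next
  case (Suc k)
  show ?case by simp (rule J_mono[OF adm K Suc.prems Suc.IH])
qed

lemma Jpow_bound:
  assumes adm: "admissible K a n" and K: "1 \<le> K"
    and step: "\<And>k y. ranked_state K y \<Longrightarrow> jump_op K a n (\<psi> k) y \<le> \<psi> (Suc k) y"
    and base: "\<And>y. ranked_state K y \<Longrightarrow> h y \<le> \<psi> 0 y"
  shows "ranked_state K x \<Longrightarrow> ((jump_op K a n)^^k) h x \<le> \<psi> k x"
proof (induction k arbitrary: x)
  case 0 then show ?case using base by simp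
next
  case (Suc k)
  have "((jump_op K a n)^^(Suc k)) h x = jump_op K a n (((jump_op K a n)^^k) h) x" by simp
  also have "\<dots> \<le> jump_op K a n (\<psi> k) x" by (rule J_mono[OF adm K Suc.prems Suc.IH])
  also have "\<dots> \<le> \<psi> (Suc k) x" by (rule step[OF Suc.prems])
  finally show ?case .
qed

lemma Jpow_zero: "((jump_op K a n)^^k) (\<lambda>y. 0) = (\<lambda>y. 0)"
proof (induction k)
  case 0 then show ?case by simp
next
  case (Suc k)
  have "((jump_op K a n)^^(Suc k)) (\<lambda>y. 0) = jump_op K a n (((jump_op K a n)^^k) (\<lambda>y. 0))" by simp
  also have "\<dots> = jump_op K a n (\<lambda>y. 0)" by (simp only: Suc)
  also have "\<dots> = (\<lambda>y. 0)" by (rule ext) (simp add: jump_op_def gen_zero)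
  finally show ?case .
qed

lemma gen_compare:
  assumes adm: "admissible K a n"
    and up: "\<And>i. i \<in> {1..K} \<Longrightarrow> up_rate K a n x i \<noteq> 0 \<Longrightarrow>
               f (x(i := Suc (x i))) - f x \<le> c * (g (x(i := Suc (x i))) - g x) + d"
    and dn: "\<And>i. i \<in> {1..K} \<Longrightarrow> down_rate K n x i \<noteq> 0 \<Longrightarrow>
               f (x(i := x i - 1)) - f x \<le> c * (g (x(i := x i - 1)) - g x) + d"
  shows "generator K a n f x \<le> c * generator K a n g x + d * tot_rate K a n x"
proof -
  have "generator K a n f x \<le> (\<Sum>i=1..K. up_rate K a n x i * (c * (g (x(i := Suc (x i))) - g x) + d)
      + down_rate K n x i * (c * (g (x(i := x i - 1)) - g x) + d))"
    unfolding generator_def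
  proof (rule sum_mono)
    fix i assume i: "i \<in> {1..K}"
    have u: "up_rate K a n x i * (f (x(i := Suc (x i))) - f x) \<le> up_rate K a n x i * (c * (g (x(i := Suc (x i))) - g x) + d)"
    proof (cases "up_rate K a n x i = 0")
      case False
      then show ?thesis using up[OF i False] up_nonneg[OF adm] by (simp add: mult_left_mono)
    qed simp
    have v: "down_rate K n x i * (f (x(i := x i - 1)) - f x) \<le> down_rate K n x i * (c * (g (x(i := x i - 1)) - g x) + d)"
    proof (cases "down_rate K n x i = 0")
      case False
      then show ?thesis using dn[OF i False] down_nonneg by (simp add: mult_left_mono)
    qed simp
    show "up_rate K a n x i * (f (x(i := Suc (x i))) - f x) + down_rate K n x i * (f (x(i := x i - 1)) - f x)
      \<le> up_rate K a n x i * (c * (g (x(i := Suc (x i))) - g x) + d) + down_rate K n x i * (c * (g (x(i := x i - 1)) - g x) + d)"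
      using u v by simp
  qed
  also have "\<dots> = c * generator K a n g x + d * tot_rate K a n x"
    unfolding generator_def tot_rate_def sum_distrib_left sum.distrib[symmetric]
    by (rule sum.cong) (auto simp: algebra_simps)
  finally show ?thesis .
qed



definition C0 :: "nat \<Rightarrow> (nat \<Rightarrow> real) \<Rightarrow> real" where
  "C0 K a = 2 * real K + (\<Sum>j=1..K. \<bar>a j\<bar>)"
definition alf :: "nat \<Rightarrow> (nat \<Rightarrow> real) \<Rightarrow> real" where
  "alf K a = Min ((\<lambda>i. \<Sum>j=i..K. a j) ` {1..K})"
definition BB :: "nat \<Rightarrow> (nat \<Rightarrow> real) \<Rightarrow> real" where
  "BB K a = real K * (C0 K a)\<^sup>2 / (alf K a)\<^sup>2"
definition gam :: "nat \<Rightarrow> (nat \<Rightarrow> real) \<Rightarrow> real" where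
  "gam K a = alf K a / sqrt (8 * real K)"
definition DD :: "nat \<Rightarrow> (nat \<Rightarrow> real) \<Rightarrow> real" where
  "DD K a = 2 + 2 * gam K a * sqrt (2 * BB K a) / C0 K a"
definition Vf :: "nat \<Rightarrow> (nat \<Rightarrow> real) \<Rightarrow> nat \<Rightarrow> (nat \<Rightarrow> nat) \<Rightarrow> real" where
  "Vf K a n y = sqrt (gsq K y + BB K a * real n)"
definition bet :: "nat \<Rightarrow> (nat \<Rightarrow> real) \<Rightarrow> nat \<Rightarrow> real" where
  "bet K a n = gam K a * sqrt (real n) / unif_rate K a n"

lemma unif_eq: "unif_rate K a n = real n * C0 K a"
  unfolding unif_rate_def C0_def ..

lemma C0_pos: "1 \<le> K \<Longrightarrow> 2 \<le> C0 K a"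
proof -
  assume "1 \<le> K"
  moreover have "0 \<le> (\<Sum>j=1..K. \<bar>a j\<bar>)" by (rule sum_nonneg) simp
  moreover have "(1::real) \<le> real K" using \<open>1 \<le> K\<close> by simp
  ultimately show ?thesis unfolding C0_def by linarith
qed

lemma alf_le: "i \<in> {1..K} \<Longrightarrow> alf K a \<le> (\<Sum>j=i..K. a j)"
  unfolding alf_def by (rule Min_le) auto

lemma alf_pos:
  assumes K: "1 \<le> K" and pos: "\<forall>i\<in>{1..K}. (\<Sum>j=i..K. a j) > 0"
  shows "0 < alf K a"
proof -
  have fin: "finite ((\<lambda>i. \<Sum>j=i..K. a j) ` {1..K})" by simp
  have ne: "(\<lambda>i. \<Sum>j=i..K. a j) ` {1..K} \<noteq> {}" using K by auto
  have "alf K a \<in> (\<lambda>i. \<Sum>j=i..K. a j) ` {1..K}" unfolding alf_def using Min_in[OF fin ne] .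
  then show ?thesis using pos by auto
qed

lemma gsq_nonneg: "0 \<le> gsq K x"
  unfolding gsq_def by (rule sum_nonneg) simp

lemma xi_sq_le: "i \<in> {1..K} \<Longrightarrow> (real (x i))\<^sup>2 \<le> gsq K x"
  unfolding gsq_def by (rule member_le_sum) auto

lemma gsq_le_top: "ranked_state K x \<Longrightarrow> gsq K x \<le> real K * (real (x K))\<^sup>2"
proof -
  assume r: "ranked_state K x"
  have "gsq K x \<le> (\<Sum>i=1..K. (real (x K))\<^sup>2)"
    unfolding gsq_def
  proof (rule sum_mono)
    fix i assume "i \<in> {1..K}"
    then have "x i \<le> x K" using ranked_mono[OF r, of i K] by auto
    then show "(real (x i))\<^sup>2 \<le> (real (x K))\<^sup>2" by (simp add: power_mono)
  qed
  then show ?thesis by simp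
qed

lemma sq_up:
  fixes u G :: real
  assumes "0 \<le> u" "u\<^sup>2 \<le> G"
  shows "sqrt (G + 2*u + 1) \<le> sqrt G + 1" "sqrt G \<le> sqrt (G + 2*u + 1)"
proof -
  have G0: "0 \<le> G" using assms by (meson order_trans zero_le_power2)
  have "u \<le> sqrt G" using assms real_le_rsqrt by blast
  then have "G + 2*u + 1 \<le> (sqrt G + 1)\<^sup>2" using G0 by (simp add: power2_eq_square algebra_simps)
  then have "sqrt (G + 2*u + 1) \<le> sqrt ((sqrt G + 1)\<^sup>2)" by (rule real_sqrt_le_mono)
  also have "\<dots> = sqrt G + 1" using real_sqrt_ge_zero[OF G0] by simp
  finally show "sqrt (G + 2*u + 1) \<le> sqrt G + 1" .
  show "sqrt G \<le> sqrt (G + 2*u + 1)" using assms by (intro real_sqrt_le_mono) simp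
qed

lemma sq_dn:
  fixes u G :: real
  assumes "1 \<le> u" "u\<^sup>2 \<le> G"
  shows "sqrt G - 1 \<le> sqrt (G - 2*u + 1)" "sqrt (G - 2*u + 1) \<le> sqrt G"
proof -
  have G0: "0 \<le> G" using assms by (meson order_trans zero_le_power2)
  have us: "u \<le> sqrt G" using assms real_le_rsqrt by blast
  show "sqrt (G - 2*u + 1) \<le> sqrt G" using assms by (intro real_sqrt_le_mono) simp
  show "sqrt G - 1 \<le> sqrt (G - 2*u + 1)"
  proof (cases "sqrt G \<le> 1")
    case True
    have "0 \<le> (u - 1)\<^sup>2" by simp
    then have "0 \<le> G - 2*u + 1" using assms by (simp add: power2_eq_square algebra_simps)
    then have "0 \<le> sqrt (G - 2*u + 1)" by simp
    then show ?thesis using True by linarith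
  next
    case False
    have "(sqrt G - 1)\<^sup>2 = G - 2 * sqrt G + 1" using G0 by (simp add: power2_eq_square algebra_simps)
    also have "\<dots> \<le> G - 2*u + 1" using us by simp
    finally have "sqrt ((sqrt G - 1)\<^sup>2) \<le> sqrt (G - 2*u + 1)" by (rule real_sqrt_le_mono)
    then show ?thesis using False by simp
  qed
qed

lemma sq_conc:
  fixes G G' :: real
  assumes "0 < G" "0 \<le> G'"
  shows "sqrt G' - sqrt G \<le> (G' - G) / (2 * sqrt G)"
proof -
  define s where "s = sqrt G"
  define s' where "s' = sqrt G'"
  have s0: "0 < s" unfolding s_def using assms by simp
  have G: "G = s * s" "G' = s' * s'" unfolding s_def s'_def using assms by simp_all
  have e: "s' * s' - s * s - (s' - s) * (2 * s) = (s' - s)\<^sup>2" by (simp add: power2_eq_square algebra_simps)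
  have "(s' - s) * (2 * s) \<le> s' * s' - s * s"
    using e zero_le_power2[of "s' - s"] by linarith
  then have "s' - s \<le> (G' - G) / (2 * s)" using s0 G by (simp add: pos_le_divide_eq)
  then show ?thesis unfolding s_def s'_def .
qed

lemma E1:
  fixes q p0 :: real
  assumes d: "\<bar>q - p0\<bar> \<le> 1"
  shows "(max q 0)\<^sup>2 - (max p0 0)\<^sup>2 \<le> 2 * max p0 0 * (q - p0) + 1"
proof -
  have d1: "q - p0 \<le> 1" "p0 - q \<le> 1" using d by auto
  consider "0 \<le> p0" "0 \<le> q" | "0 \<le> p0" "q < 0" | "p0 < 0" "0 \<le> q" | "p0 < 0" "q < 0" by linarith
  then show ?thesis
  proof cases
    case 1
    have "(q - p0)\<^sup>2 \<le> 1" using d by (simp add: abs_square_le_1)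
    then show ?thesis using 1 by (simp add: max_def power2_eq_square algebra_simps)
  next
    case 2
    have "2 * p0 * q \<ge> 2 * p0 * (p0 - 1)" using 2 d1 by (intro mult_left_mono) auto
    moreover have "0 \<le> (p0 - 1)\<^sup>2" by simp
    ultimately show ?thesis using 2 by (simp add: max_def power2_eq_square algebra_simps)
  next
    case 3
    have "q \<le> 1" using 3 d1 by simp
    then have "q * q \<le> 1 * 1" using 3 by (intro mult_mono) auto
    then show ?thesis using 3 by (simp add: max_def power2_eq_square)
  next
    case 4
    then show ?thesis by (simp add: max_def)
  qed
qed



context
  fixes K :: nat and a :: "nat \<Rightarrow> real" and n :: nat
  assumes K1: "1 \<le> K" and pos: "\<forall>i\<in>{1..K}. (\<Sum>j=i..K. a j) > 0" and adm: "admissible K a n"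
begin

lemma n1: "1 \<le> real n" using adm unfolding admissible_def by simp
lemma sn1: "1 \<le> sqrt (real n)" using sqrt_n_ge1[OF adm] .
lemma C0p: "2 \<le> C0 K a" using C0_pos[OF K1] .
lemma alfp: "0 < alf K a" using alf_pos[OF K1 pos] .
lemma BBp: "0 < BB K a" unfolding BB_def using K1 C0p alfp by simp
lemma gamp: "0 < gam K a" unfolding gam_def using K1 alfp by simp
lemma Lp: "0 < unif_rate K a n" using unif_pos[OF adm K1] .
lemma Vpos: "0 < Vf K a n y"
  unfolding Vf_def using gsq_nonneg[of K y] BBp n1 by (simp add: add_nonneg_pos)

lemma gam_sq: "(gam K a)\<^sup>2 = (alf K a)\<^sup>2 / (8 * real K)"
  unfolding gam_def by (simp add: power_divide)

lemma drift_nonneg: "ranked_state K x \<Longrightarrow> alf K a * real (x K) \<le> (\<Sum>j=1..K. a j * real (x j))"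
  by (rule drift_lower) (auto simp: alf_le)

lemma Qg_le_L: "ranked_state K x \<Longrightarrow> generator K a n (gsq K) x \<le> unif_rate K a n"
proof -
  assume r: "ranked_state K x"
  have "0 \<le> alf K a * real (x K)" using alfp by simp
  then have "0 \<le> (\<Sum>j=1..K. a j * real (x j))" using drift_nonneg[OF r] by linarith
  then have "0 \<le> 2 * sqrt (real n) * (\<Sum>j=1..K. a j * real (x j))" by simp
  then show ?thesis using Qg_bound[OF adm r] by linarith
qed

lemma Qg_neg:
  assumes r: "ranked_state K x" and big: "BB K a * real n \<le> gsq K x"
  shows "generator K a n (gsq K) x \<le> - 2 * gam K a * sqrt (real n) * Vf K a n x"
proof -
  define m where "m = real (x K)"
  define al where "al = alf K a"
  have m0: "0 \<le> m" unfolding m_def by simp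
  have al0: "0 < al" unfolding al_def using alfp .
  have gm: "gsq K x \<le> real K * m\<^sup>2" unfolding m_def by (rule gsq_le_top[OF r])
  have S: "al * m \<le> (\<Sum>j=1..K. a j * real (x j))" unfolding al_def m_def by (rule drift_nonneg[OF r])
  have K0: "0 < real K" using K1 by simp
  have BBe: "al\<^sup>2 * BB K a = real K * (C0 K a)\<^sup>2" unfolding BB_def al_def using al0 al_def by (simp add: field_simps)
  have "al\<^sup>2 * (BB K a * real n) \<le> al\<^sup>2 * (real K * m\<^sup>2)"
    using big gm by (intro mult_left_mono) auto
  then have "real K * ((C0 K a)\<^sup>2 * real n) \<le> real K * (al\<^sup>2 * m\<^sup>2)"
    using BBe by (simp add: algebra_simps)
  then have "(C0 K a)\<^sup>2 * real n \<le> al\<^sup>2 * m\<^sup>2" using K0 by simp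
  then have "(C0 K a * sqrt (real n))\<^sup>2 \<le> (al * m)\<^sup>2" by (simp add: power_mult_distrib)
  moreover have am0: "0 \<le> al * m" using al0 m0 by simp
  ultimately have c1: "C0 K a * sqrt (real n) \<le> al * m"
    by (rule power2_le_imp_le)
  have Lam: "unif_rate K a n = sqrt (real n) * (C0 K a * sqrt (real n))"
    unfolding unif_eq by (simp add: algebra_simps)
  have c2: "unif_rate K a n \<le> sqrt (real n) * (al * m)"
    unfolding Lam using c1 sn1 by (intro mult_left_mono) auto
  have V2: "(Vf K a n x)\<^sup>2 \<le> 2 * real K * m\<^sup>2"
  proof -
    have "(Vf K a n x)\<^sup>2 = gsq K x + BB K a * real n"
      unfolding Vf_def using gsq_nonneg[of K x] BBp n1 by simp
    then show ?thesis using big gm by simp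
  qed
  have "(2 * gam K a * Vf K a n x)\<^sup>2 = 4 * (gam K a)\<^sup>2 * (Vf K a n x)\<^sup>2" by (simp add: power_mult_distrib)
  also have "\<dots> \<le> 4 * (gam K a)\<^sup>2 * (2 * real K * m\<^sup>2)" using V2 by (intro mult_left_mono) auto
  also have "\<dots> = (al * m)\<^sup>2" unfolding gam_sq al_def using K0 by (simp add: field_simps power_mult_distrib)
  finally have c3: "2 * gam K a * Vf K a n x \<le> al * m"
    using am0 by (rule power2_le_imp_le)
  have "sqrt (real n) * (al * m) \<le> sqrt (real n) * (\<Sum>j=1..K. a j * real (x j))"
    using S sn1 by (intro mult_left_mono) auto
  then have "generator K a n (gsq K) x \<le> - 2 * sqrt (real n) * (al * m) + sqrt (real n) * (al * m)"
    using Qg_bound[OF adm r] c2 by linarith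
  also have "\<dots> = - (sqrt (real n) * (al * m))" by simp
  also have "\<dots> \<le> - (sqrt (real n) * (2 * gam K a * Vf K a n x))"
    using c3 sn1 by (simp add: mult_left_mono)
  finally show ?thesis by (simp add: algebra_simps)
qed

lemma DD_ge: "2 \<le> DD K a"
proof -
  have "0 \<le> 2 * gam K a * sqrt (2 * BB K a) / C0 K a" using gamp BBp C0p by simp
  then show ?thesis unfolding DD_def by simp
qed

lemma bet_nonneg: "0 \<le> bet K a n"
  unfolding bet_def using gamp Lp by simp

lemma V_edges:
  assumes i: "i \<in> {1..K}"
  shows "\<bar>Vf K a n (x(i := Suc (x i))) - Vf K a n x\<bar> \<le> 1"
    and "1 \<le> x i \<Longrightarrow> \<bar>Vf K a n (x(i := x i - 1)) - Vf K a n x\<bar> \<le> 1"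
proof -
  define G where "G = gsq K x + BB K a * real n"
  define u where "u = real (x i)"
  have u0: "0 \<le> u" unfolding u_def by simp
  have "0 \<le> BB K a * real n" using BBp by simp
  then have uG: "u\<^sup>2 \<le> G" unfolding G_def u_def using xi_sq_le[OF i, of x] by linarith
  have Vx: "Vf K a n x = sqrt G" unfolding Vf_def G_def ..
  have "Vf K a n (x(i := Suc (x i))) = sqrt (G + 2*u + 1)"
    unfolding Vf_def G_def u_def gsq_upd[OF i] by (simp add: power2_eq_square algebra_simps)
  then show "\<bar>Vf K a n (x(i := Suc (x i))) - Vf K a n x\<bar> \<le> 1"
    using sq_up[OF u0 uG] Vx by simp
  assume x1: "1 \<le> x i"
  then have u1: "1 \<le> u" unfolding u_def by simp
  have e: "real (x i - 1) = real (x i) - 1" using x1 by (simp add: of_nat_diff)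
  have "gsq K (x(i := x i - 1)) = gsq K x - 2 * real (x i) + 1"
    unfolding gsq_upd[OF i] e by (simp add: power2_eq_square algebra_simps)
  then have "Vf K a n (x(i := x i - 1)) = sqrt (G - 2*u + 1)"
    unfolding Vf_def G_def u_def by (simp add: algebra_simps)
  then show "\<bar>Vf K a n (x(i := x i - 1)) - Vf K a n x\<bar> \<le> 1"
    using sq_dn[OF u1 uG] Vx by simp
qed

lemma onestep:
  assumes r: "ranked_state K x" and c0: "0 \<le> c"
  shows "jump_op K a n (\<lambda>y. (max (Vf K a n y - c) 0)\<^sup>2) x
         \<le> (max (Vf K a n x - (c + bet K a n)) 0)\<^sup>2 + DD K a"
proof -
  define V where "V = Vf K a n"
  define h where "h = (\<lambda>y. (max (V y - c) 0)\<^sup>2)"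
  define Vx where "Vx = V x"
  define p where "p = max (Vx - c) 0"
  define L where "L = unif_rate K a n"
  define b where "b = BB K a * real n"
  define \<beta> where "\<beta> = bet K a n"
  define Qg where "Qg = generator K a n (gsq K) x"
  have Vx0: "0 < Vx" unfolding Vx_def V_def by (rule Vpos)
  have p0: "0 \<le> p" unfolding p_def by simp
  have pV: "p \<le> Vx" unfolding p_def using c0 Vx0 by simp
  have b0: "0 < b" unfolding b_def using BBp n1 by simp
  have L0: "0 < L" unfolding L_def by (rule Lp)
  have \<beta>0: "0 \<le> \<beta>" unfolding \<beta>_def by (rule bet_nonneg)
  have VG: "V y = sqrt (gsq K y + b)" for y unfolding V_def Vf_def b_def ..
  have Gx: "0 < gsq K x + b" using gsq_nonneg[of K x] b0 by simp
  have edge: "h y' - h x \<le> (p / Vx) * (gsq K y' - gsq K x) + 1"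
    if d1: "\<bar>V y' - Vx\<bar> \<le> 1" for y'
  proof -
    have e1: "h y' - h x \<le> 2 * p * (V y' - Vx) + 1"
      using E1[of "V y' - c" "Vx - c"] d1 unfolding h_def p_def Vx_def by simp
    have "V y' - Vx \<le> (gsq K y' + b - (gsq K x + b)) / (2 * Vx)"
      using sq_conc[OF Gx, of "gsq K y' + b"] gsq_nonneg[of K y'] b0 unfolding VG Vx_def by simp
    then have "V y' - Vx \<le> (gsq K y' - gsq K x) / (2 * Vx)" by simp
    then have "2 * p * (V y' - Vx) \<le> 2 * p * ((gsq K y' - gsq K x) / (2 * Vx))"
      using p0 by (intro mult_left_mono) auto
    also have "\<dots> = (p / Vx) * (gsq K y' - gsq K x)" using Vx0 by (simp add: field_simps)
    finally show ?thesis using e1 by simp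
  qed
  have gen: "generator K a n h x \<le> (p / Vx) * Qg + 1 * tot_rate K a n x"
    unfolding Qg_def
  proof (rule gen_compare[OF adm])
    fix i assume i: "i \<in> {1..K}"
    show "h (x(i := Suc (x i))) - h x \<le> p / Vx * (gsq K (x(i := Suc (x i))) - gsq K x) + 1"
      by (rule edge) (use V_edges(1)[OF i, of x] in \<open>simp add: V_def Vx_def\<close>)
    assume nz: "down_rate K n x i \<noteq> 0"
    then have "1 \<le> x i" unfolding down_rate_def by (auto split: if_splits)
    then show "h (x(i := x i - 1)) - h x \<le> p / Vx * (gsq K (x(i := x i - 1)) - gsq K x) + 1"
      by (intro edge) (use V_edges(2)[OF i, of x] in \<open>simp add: V_def Vx_def\<close>)
  qed
  have tot: "tot_rate K a n x \<le> L" unfolding L_def by (rule tot_rate_le[OF adm r])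
  have hx: "h x = p\<^sup>2" unfolding h_def p_def Vx_def ..
  have J: "jump_op K a n h x \<le> p\<^sup>2 + (p / Vx) * (Qg / L) + 1"
  proof -
    have "generator K a n h x / L \<le> ((p / Vx) * Qg + tot_rate K a n x) / L"
      using gen L0 by (simp add: divide_right_mono)
    also have "\<dots> = (p / Vx) * (Qg / L) + tot_rate K a n x / L" by (simp add: add_divide_distrib)
    also have "tot_rate K a n x / L \<le> 1" using tot L0 by simp
    finally have "generator K a n h x / L \<le> (p / Vx) * (Qg / L) + 1" by simp
    then show ?thesis unfolding jump_op_def hx L_def by simp
  qed
  have tgt: "max (Vx - (c + \<beta>)) 0 = max (p - \<beta>) 0" if "0 < Vx - c"
    unfolding p_def using that by simp
  have DD2: "2 \<le> DD K a" by (rule DD_ge)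
  show ?thesis
  proof (cases "Vx - c \<le> 0")
    case True
    then have "p = 0" unfolding p_def by simp
    then have "jump_op K a n h x \<le> 1" using J by simp
    then show ?thesis using DD2 unfolding h_def V_def Vx_def[symmetric] \<beta>_def[symmetric]
      by (smt (verit) zero_le_power2)
  next
    case False
    then have pp: "p = Vx - c" "0 < p" unfolding p_def by auto
    have T: "(max (Vf K a n x - (c + bet K a n)) 0)\<^sup>2 = (max (p - \<beta>) 0)\<^sup>2"
      using tgt False unfolding Vx_def V_def \<beta>_def by simp
    show ?thesis
    proof (cases "b \<le> gsq K x")
      case True
      have q: "Qg \<le> - 2 * gam K a * sqrt (real n) * Vx"
        unfolding Qg_def Vx_def V_def using Qg_neg[OF r] True unfolding b_def by simp
      have "(p / Vx) * (Qg / L) \<le> (p / Vx) * ((- 2 * gam K a * sqrt (real n) * Vx) / L)"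
        using q L0 p0 Vx0 by (intro mult_left_mono divide_right_mono) auto
      also have "\<dots> = - 2 * p * \<beta>" unfolding \<beta>_def bet_def L_def using Vx0 by (simp add: field_simps)
      finally have "jump_op K a n h x \<le> p\<^sup>2 - 2 * p * \<beta> + 1" using J by simp
      moreover have "p\<^sup>2 - 2 * p * \<beta> \<le> (max (p - \<beta>) 0)\<^sup>2"
      proof (cases "\<beta> \<le> p")
        case True then show ?thesis by (simp add: max_def power2_eq_square algebra_simps)
      next
        case False
        then have "p * (p - 2 * \<beta>) \<le> 0" using pp by (intro mult_nonneg_nonpos) auto
        moreover have "p\<^sup>2 - 2 * p * \<beta> = p * (p - 2 * \<beta>)" by (simp add: power2_eq_square algebra_simps)
        moreover have "0 \<le> (max (p - \<beta>) 0)\<^sup>2" by simp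
        ultimately show ?thesis by linarith
      qed
      ultimately show ?thesis unfolding h_def V_def T using DD2 by simp
    next
      case False
      have q: "Qg \<le> L" unfolding Qg_def L_def by (rule Qg_le_L[OF r])
      have "(p / Vx) * (Qg / L) \<le> (p / Vx) * 1"
        using q L0 p0 Vx0 by (intro mult_left_mono) auto
      also have "\<dots> \<le> 1" using pV Vx0 by simp
      finally have J2: "jump_op K a n h x \<le> p\<^sup>2 + 2" using J by simp
      have s1: "p\<^sup>2 \<le> (max (p - \<beta>) 0)\<^sup>2 + 2 * \<beta> * p"
      proof (cases "\<beta> \<le> p")
        case True
        have "0 \<le> \<beta> * \<beta>" by simp
        then show ?thesis using True by (simp add: max_def power2_eq_square algebra_simps)
      next
        case False
        then have "p * p \<le> \<beta> * p" using pp by (intro mult_right_mono) auto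
        moreover have "0 \<le> \<beta> * p" using \<beta>0 pp by simp
        moreover have mz: "max (p - \<beta>) 0 = 0" using False by simp
        ultimately show ?thesis unfolding mz by (simp add: power2_eq_square)
      qed
      have VV: "Vx\<^sup>2 \<le> (sqrt (2 * BB K a) * sqrt (real n))\<^sup>2"
      proof -
        have "Vx\<^sup>2 = gsq K x + b" unfolding Vx_def VG using Gx by simp
        also have "\<dots> \<le> 2 * BB K a * real n" using False unfolding b_def by (simp add: mult.commute)
        also have "\<dots> = (sqrt (2 * BB K a) * sqrt (real n))\<^sup>2" using BBp n1 by (simp add: power_mult_distrib)
        finally show ?thesis .
      qed
      have Vb: "Vx \<le> sqrt (2 * BB K a) * sqrt (real n)"
        using VV by (rule power2_le_imp_le) (use BBp in simp)
      have "2 * \<beta> * p \<le> 2 * \<beta> * Vx" using pV \<beta>0 by (simp add: mult_left_mono)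
      also have "\<dots> \<le> 2 * \<beta> * (sqrt (2 * BB K a) * sqrt (real n))" using Vb \<beta>0 by (simp add: mult_left_mono)
      also have "\<dots> = 2 * gam K a * sqrt (2 * BB K a) / C0 K a"
      proof -
        have "sqrt (real n) * sqrt (real n) = real n" by simp
        then show ?thesis unfolding \<beta>_def bet_def unif_eq using n1 C0p
          by (simp add: field_simps)
      qed
      finally have "2 * \<beta> * p \<le> 2 * gam K a * sqrt (2 * BB K a) / C0 K a" .
      then have "jump_op K a n h x \<le> (max (p - \<beta>) 0)\<^sup>2 + DD K a"
        using J2 s1 unfolding DD_def by simp
      then show ?thesis unfolding h_def V_def T .
    qed
  qed
qed

end


lemma series_bound:
  fixes l A B C :: real and w :: "nat \<Rightarrow> real"
  assumes l0: "0 \<le> l" and w0: "\<And>k. 0 \<le> w k"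
    and wb: "\<And>k. w k \<le> A * (real k - l)\<^sup>2 + B * real k + C"
  shows "(\<Sum>k. exp (-l) * l^k / fact k * w k) \<le> A*l + B*l + C"
proof -
  let ?u = "\<lambda>k. exp (-l) * l^k / fact k * (A * (real k - l)\<^sup>2 + B * real k + C)"
  have su: "?u sums (A*l + B*l + C)" by (rule poisson_moment)
  have p0: "0 \<le> exp (-l) * l^k / fact k" for k using l0 by simp
  have le: "exp (-l) * l^k / fact k * w k \<le> ?u k" for k
    using p0[of k] wb[of k] by (rule mult_left_mono[rotated])
  have nn: "0 \<le> exp (-l) * l^k / fact k * w k" for k by (rule mult_nonneg_nonneg[OF p0 w0])
  have sw: "summable (\<lambda>k. exp (-l) * l^k / fact k * w k)"
  proof (rule summable_comparison_test'[OF sums_summable[OF su], of 0])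
    fix k :: nat
    show "norm (exp (-l) * l^k / fact k * w k) \<le> ?u k"
      by (subst real_norm_def, subst abs_of_nonneg[OF nn]) (rule le)
  qed
  have "(\<Sum>k. exp (-l) * l^k / fact k * w k) \<le> suminf ?u"
    by (rule suminf_le[OF le sw sums_summable[OF su]])
  also have "\<dots> = A*l + B*l + C" using su by (simp add: sums_iff)
  finally show ?thesis .
qed

lemma zhat_dd: "ranked_state K x \<Longrightarrow> zhat_normsq K n x = (\<Sum>i=1..K. (dd x i)\<^sup>2) / real n"
  unfolding zhat_normsq_def dd_def ..

lemma dd_sq_le_gsq: "ranked_state K x \<Longrightarrow> (\<Sum>i=1..K. (dd x i)\<^sup>2) \<le> gsq K x"
  unfolding gsq_def
proof (rule sum_mono)
  fix i assume r: "ranked_state K x" and i: "i \<in> {1..K}"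
  show "(dd x i)\<^sup>2 \<le> (real (x i))\<^sup>2" using dd_nonneg[OF r i] dd_le[OF r i] by (simp add: power_mono)
qed

lemma gsq_le_dd: 
  assumes r: "ranked_state K x"
  shows "gsq K x \<le> (real K)^3 * (\<Sum>i=1..K. (dd x i)\<^sup>2)"
proof -
  define S where "S = (\<Sum>i=1..K. (dd x i)\<^sup>2)"
  have S0: "0 \<le> S" unfolding S_def by (rule sum_nonneg) simp
  have "real (x K) = (\<Sum>i=1..K. dd x i)" using telescope_dd[of x K, OF ranked_zero[OF r]] by simp
  also have "\<dots> \<le> (\<Sum>i=1..K. sqrt S)"
  proof (rule sum_mono)
    fix i assume i: "i \<in> {1..K}"
    have "(dd x i)\<^sup>2 \<le> S" unfolding S_def by (rule member_le_sum) (use i in auto)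
    then show "dd x i \<le> sqrt S" by (rule real_le_rsqrt)
  qed
  also have "\<dots> = real K * sqrt S" by simp
  finally have m: "real (x K) \<le> real K * sqrt S" .
  have "(real (x K))\<^sup>2 \<le> (real K * sqrt S)\<^sup>2" using m by (intro power_mono) auto
  also have "\<dots> = (real K)\<^sup>2 * S" using S0 by (simp add: power_mult_distrib)
  finally have m2: "(real (x K))\<^sup>2 \<le> (real K)\<^sup>2 * S" .
  have "gsq K x \<le> real K * (real (x K))\<^sup>2" by (rule gsq_le_top[OF r])
  also have "\<dots> \<le> real K * ((real K)\<^sup>2 * S)" using m2 by (intro mult_left_mono) auto
  also have "\<dots> = (real K)^3 * S" by (simp add: power2_eq_square power3_eq_cube)
  finally show ?thesis unfolding S_def .
qed

definition tzero :: "nat \<Rightarrow> (nat \<Rightarrow> real) \<Rightarrow> real" where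
  "tzero K a = sqrt ((real K)^3 + BB K a) / gam K a"
definition DDD :: "nat \<Rightarrow> (nat \<Rightarrow> real) \<Rightarrow> real" where
  "DDD K a = (real K)^3 / tzero K a + C0 K a + ((gam K a)\<^sup>2 / (C0 K a)\<^sup>2 + DD K a) * C0 K a"

context
  fixes K :: nat and a :: "nat \<Rightarrow> real" and n :: nat
  assumes K1: "1 \<le> K" and pos: "\<forall>i\<in>{1..K}. (\<Sum>j=i..K. a j) > 0" and adm: "admissible K a n"
begin

lemma t0pos: "0 < tzero K a"
  unfolding tzero_def using gamp[OF K1 pos adm] BBp[OF K1 pos adm] by (simp add: add_nonneg_pos)

lemma D3pos: "0 < DDD K a"
proof -
  have "0 \<le> (real K)^3 / tzero K a" using t0pos by simp
  moreover have "0 \<le> ((gam K a)\<^sup>2 / (C0 K a)\<^sup>2 + DD K a) * C0 K a"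
    using DD_ge[OF K1 pos adm] C0p[OF K1 pos adm] by simp
  moreover have "0 < C0 K a" using C0p[OF K1 pos adm] by simp
  ultimately show ?thesis unfolding DDD_def by linarith
qed

lemma f_le_gsq: "ranked_state K y \<Longrightarrow> zhat_normsq K n y \<le> gsq K y / real n"
  using zhat_dd[of K y n] dd_sq_le_gsq[of K y] n1[OF K1 pos adm] by (simp add: divide_right_mono)

lemma f_nonneg: "0 \<le> zhat_normsq K n y"
  unfolding zhat_normsq_def by (rule divide_nonneg_nonneg) (auto intro: sum_nonneg)

lemma Jk_nonneg: "ranked_state K x \<Longrightarrow> 0 \<le> ((jump_op K a n)^^k) (zhat_normsq K n) x"
  using Jpow_mono[OF adm K1, of "\<lambda>y. 0" "zhat_normsq K n" x k] f_nonneg by (simp add: Jpow_zero)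

lemma small_bound:
  assumes r: "ranked_state K x"
  shows "((jump_op K a n)^^k) (zhat_normsq K n) x \<le> (gsq K x + real k) / real n"
proof -
  define \<psi> where "\<psi> = (\<lambda>k y. (gsq K y + real k) / real n)"
  have n0: "0 < real n" using n1[OF K1 pos adm] by simp
  have L0: "0 < unif_rate K a n" by (rule Lp[OF K1 pos adm])
  have step: "jump_op K a n (\<psi> k) y \<le> \<psi> (Suc k) y" if ry: "ranked_state K y" for k y
  proof -
    have e: "\<psi> k = (\<lambda>y. (1 / real n) * gsq K y + real k / real n)"
      unfolding \<psi>_def by (rule ext) (simp add: add_divide_distrib)
    have eqJ: "jump_op K a n (\<psi> k) y = (1 / real n) * jump_op K a n (gsq K) y + real k / real n"
      unfolding e by (rule J_affine)
    have j1: "jump_op K a n (gsq K) y \<le> gsq K y + 1"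
      unfolding jump_op_def using Qg_le_L[OF K1 pos adm ry] L0 by simp
    have "(1 / real n) * jump_op K a n (gsq K) y + real k / real n \<le> (1 / real n) * (gsq K y + 1) + real k / real n"
      using j1 n0 by (intro add_right_mono mult_left_mono) auto
    then have "jump_op K a n (\<psi> k) y \<le> (1 / real n) * (gsq K y + 1) + real k / real n" unfolding eqJ .
    also have "\<dots> = \<psi> (Suc k) y" unfolding \<psi>_def using n0 by (simp add: field_simps)
    finally show ?thesis .
  qed
  have base: "zhat_normsq K n y \<le> \<psi> 0 y" if "ranked_state K y" for y
    unfolding \<psi>_def using f_le_gsq[OF that] by simp
  show ?thesis using Jpow_bound[OF adm K1, of \<psi> "zhat_normsq K n", OF step base r] unfolding \<psi>_def by simp
qed

lemma large_bound:
  assumes r: "ranked_state K x"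
  shows "((jump_op K a n)^^k) (zhat_normsq K n) x
      \<le> ((max (Vf K a n x - bet K a n * real k) 0)\<^sup>2 + DD K a * real k) / real n"
proof -
  define \<psi> where "\<psi> = (\<lambda>k y. ((max (Vf K a n y - bet K a n * real k) 0)\<^sup>2 + DD K a * real k) / real n)"
  have n0: "0 < real n" using n1[OF K1 pos adm] by simp
  have step: "jump_op K a n (\<psi> k) y \<le> \<psi> (Suc k) y" if ry: "ranked_state K y" for k y
  proof -
    have e: "\<psi> k = (\<lambda>y. (1 / real n) * (max (Vf K a n y - bet K a n * real k) 0)\<^sup>2 + DD K a * real k / real n)"
      unfolding \<psi>_def by (rule ext) (simp add: add_divide_distrib)
    have eqJ: "jump_op K a n (\<psi> k) y = (1 / real n) * jump_op K a n (\<lambda>y. (max (Vf K a n y - bet K a n * real k) 0)\<^sup>2) y + DD K a * real k / real n"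
      unfolding e by (rule J_affine)
    have j1: "jump_op K a n (\<lambda>y. (max (Vf K a n y - bet K a n * real k) 0)\<^sup>2) y
        \<le> (max (Vf K a n y - (bet K a n * real k + bet K a n)) 0)\<^sup>2 + DD K a"
      by (rule onestep[OF K1 pos adm ry]) (use bet_nonneg[OF K1 pos adm] in simp)
    have "(1 / real n) * jump_op K a n (\<lambda>y. (max (Vf K a n y - bet K a n * real k) 0)\<^sup>2) y + DD K a * real k / real n
       \<le> (1 / real n) * ((max (Vf K a n y - (bet K a n * real k + bet K a n)) 0)\<^sup>2 + DD K a) + DD K a * real k / real n"
      using j1 n0 by (intro add_right_mono mult_left_mono) auto
    then have "jump_op K a n (\<psi> k) y \<le> (1 / real n) * ((max (Vf K a n y - (bet K a n * real k + bet K a n)) 0)\<^sup>2 + DD K a) + DD K a * real k / real n" unfolding eqJ .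
    also have "\<dots> = \<psi> (Suc k) y" unfolding \<psi>_def using n0 by (simp add: field_simps)
    finally show ?thesis .
  qed
  have base: "zhat_normsq K n y \<le> \<psi> 0 y" if "ranked_state K y" for y
  proof -
    have V0: "0 < Vf K a n y" by (rule Vpos[OF K1 pos adm])
    have "(Vf K a n y)\<^sup>2 = gsq K y + BB K a * real n"
      unfolding Vf_def using gsq_nonneg[of K y] BBp[OF K1 pos adm] by simp
    then have "gsq K y \<le> (Vf K a n y)\<^sup>2" using BBp[OF K1 pos adm] by simp
    then have "gsq K y / real n \<le> (Vf K a n y)\<^sup>2 / real n" using n0 by (simp add: divide_right_mono)
    then show ?thesis unfolding \<psi>_def using f_le_gsq[OF that] V0 by simp
  qed
  show ?thesis using Jpow_bound[OF adm K1, of \<psi> "zhat_normsq K n", OF step base r] unfolding \<psi>_def by simp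
qed

lemma main_bound:
  assumes r: "ranked_state K x" and t: "tzero K a \<le> t"
  shows "expect_at K a n x (sqrt (zhat_normsq K n x) * t) (zhat_normsq K n)
         \<le> DDD K a * (t * sqrt (zhat_normsq K n x))"
proof -
  define z2 where "z2 = zhat_normsq K n x"
  define rr where "rr = sqrt z2"
  define C where "C = C0 K a"
  define L where "L = unif_rate K a n"
  define l where "l = L * (rr * t)"
  define w where "w = (\<lambda>k. ((jump_op K a n)^^k) (zhat_normsq K n) x)"
  have n0: "0 < real n" using n1[OF K1 pos adm] by simp
  have z0: "0 \<le> z2" using f_nonneg[of x] by (simp add: z2_def)
  have rr0: "0 \<le> rr" unfolding rr_def using z0 by simp
  have t0: "0 < t" using t t0pos by linarith
  have C2: "2 \<le> C" unfolding C_def by (rule C0p[OF K1 pos adm])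
  have LnC: "L = real n * C" unfolding L_def C_def by (rule unif_eq)
  have l0: "0 \<le> l" unfolding l_def LnC using n0 C2 rr0 t0 by simp
  have ln: "l / real n = C * rr * t" unfolding l_def LnC using n0 by simp
  have E: "expect_at K a n x (rr * t) (zhat_normsq K n) = (\<Sum>k. exp (-l) * l^k / fact k * w k)"
    unfolding expect_at_def l_def w_def L_def by simp
  have w0: "0 \<le> w k" for k unfolding w_def by (rule Jk_nonneg[OF r])
  have gz: "gsq K x \<le> (real K)^3 * (real n * z2)"
    using gsq_le_dd[OF r] zhat_dd[OF r, of n] n0 unfolding z2_def by simp
  have gz2: "gsq K x / real n \<le> (real K)^3 * z2" using gz n0 by (simp add: divide_le_eq algebra_simps)
  have z2r: "z2 = rr\<^sup>2" unfolding rr_def using z0 by simp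
  have D3: "DDD K a = (real K)^3 / tzero K a + C + ((gam K a)\<^sup>2 / C\<^sup>2 + DD K a) * C"
    unfolding DDD_def C_def ..
  show ?thesis
  proof (cases "rr < 1")
    case True
    have "(\<Sum>k. exp (-l) * l^k / fact k * w k) \<le> 0 * l + (1 / real n) * l + gsq K x / real n"
    proof (rule series_bound[OF l0 w0])
      fix k
      have "w k \<le> (gsq K x + real k) / real n" unfolding w_def by (rule small_bound[OF r])
      then show "w k \<le> 0 * (real k - l)\<^sup>2 + 1 / real n * real k + gsq K x / real n"
        by (simp add: add_divide_distrib)
    qed
    also have "\<dots> = C * rr * t + gsq K x / real n" using ln by simp
    also have "gsq K x / real n \<le> (real K)^3 / tzero K a * (t * rr)"
    proof -
      have "gsq K x / real n \<le> (real K)^3 * rr\<^sup>2" using gz2 z2r by simp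
      also have "\<dots> \<le> (real K)^3 * rr" using True rr0 by (intro mult_left_mono) (auto simp: power2_eq_square mult_left_le_one_le)
      also have "\<dots> \<le> (real K)^3 * (rr * (t / tzero K a))"
        using t t0pos rr0 by (intro mult_left_mono) (auto simp: le_divide_eq mult_le_cancel_left1 intro: mult_left_mono)
      also have "\<dots> = (real K)^3 / tzero K a * (t * rr)" by simp
      finally show ?thesis .
    qed
    finally have "(\<Sum>k. exp (-l) * l^k / fact k * w k) \<le> ((real K)^3 / tzero K a + C) * (t * rr)"
      by (simp add: algebra_simps)
    also have "\<dots> \<le> DDD K a * (t * rr)"
    proof -
      have "0 \<le> ((gam K a)\<^sup>2 / C\<^sup>2 + DD K a) * C" using DD_ge[OF K1 pos adm] C2 by simp
      then have "(real K)^3 / tzero K a + C \<le> DDD K a" unfolding D3 by simp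
      then show ?thesis using t0 rr0 by (intro mult_right_mono) auto
    qed
    finally show ?thesis using E unfolding rr_def z2_def by simp
  next
    case False
    define \<beta> where "\<beta> = bet K a n"
    define g where "g = gam K a"
    have g0: "0 < g" unfolding g_def by (rule gamp[OF K1 pos adm])
    have \<beta>0: "0 \<le> \<beta>" unfolding \<beta>_def by (rule bet_nonneg[OF K1 pos adm])
    have \<beta>l: "\<beta> * l = g * sqrt (real n) * rr * t"
      unfolding \<beta>_def g_def bet_def l_def L_def using Lp[OF K1 pos adm] by simp
    have Vle: "Vf K a n x \<le> \<beta> * l"
    proof -
      have "(Vf K a n x)\<^sup>2 = gsq K x + BB K a * real n"
        unfolding Vf_def using gsq_nonneg[of K x] BBp[OF K1 pos adm] n0 by simp
      also have "\<dots> \<le> (real K)^3 * (real n * rr\<^sup>2) + BB K a * (real n * rr\<^sup>2)"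
      proof -
        have "1 \<le> rr\<^sup>2" using False by (simp add: one_le_power)
        then have "BB K a * real n \<le> BB K a * (real n * rr\<^sup>2)"
          using BBp[OF K1 pos adm] n0 by (simp add: mult_le_cancel_left1)
        then show ?thesis using gz[unfolded z2r] by linarith
      qed
      also have "\<dots> = real n * rr\<^sup>2 * ((real K)^3 + BB K a)" by (simp add: algebra_simps)
      also have "\<dots> \<le> real n * rr\<^sup>2 * (g * t)\<^sup>2"
      proof -
        have "sqrt ((real K)^3 + BB K a) \<le> g * t"
          using t g0 unfolding tzero_def g_def by (simp add: divide_le_eq mult.commute)
        moreover have "0 \<le> (real K)^3 + BB K a" using BBp[OF K1 pos adm] by simp
        ultimately have "(real K)^3 + BB K a \<le> (g * t)\<^sup>2"
          by (metis real_sqrt_le_iff real_sqrt_pow2 real_sqrt_power real_sqrt_le_mono power2_eq_square sqrt_le_D)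
        then show ?thesis using n0 by (intro mult_left_mono) auto
      qed
      also have "\<dots> = (\<beta> * l)\<^sup>2" unfolding \<beta>l using n0 by (simp add: power_mult_distrib)
      finally show ?thesis
        by (rule power2_le_imp_le) (use \<beta>0 l0 in simp)
    qed
    have wb: "w k \<le> (\<beta>\<^sup>2 / real n) * (real k - l)\<^sup>2 + (DD K a / real n) * real k + 0" for k
    proof -
      have "max (Vf K a n x - \<beta> * real k) 0 \<le> \<bar>\<beta> * (real k - l)\<bar>"
        using Vle \<beta>0 by (auto simp: algebra_simps abs_if)
      then have "(max (Vf K a n x - \<beta> * real k) 0)\<^sup>2 \<le> (\<bar>\<beta> * (real k - l)\<bar>)\<^sup>2"
        by (intro power_mono) auto
      then have "(max (Vf K a n x - \<beta> * real k) 0)\<^sup>2 \<le> \<beta>\<^sup>2 * (real k - l)\<^sup>2"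
        by (simp add: power_mult_distrib)
      then have "((max (Vf K a n x - \<beta> * real k) 0)\<^sup>2 + DD K a * real k) / real n
           \<le> (\<beta>\<^sup>2 * (real k - l)\<^sup>2 + DD K a * real k) / real n"
        using n0 by (simp add: divide_right_mono)
      then show ?thesis using large_bound[OF r, of k] unfolding w_def \<beta>_def
        by (simp add: add_divide_distrib)
    qed
    have "(\<Sum>k. exp (-l) * l^k / fact k * w k) \<le> (\<beta>\<^sup>2 / real n) * l + (DD K a / real n) * l + 0"
      by (rule series_bound[OF l0 w0 wb])
    also have "\<dots> = (\<beta>\<^sup>2 + DD K a) * (l / real n)" by (simp add: algebra_simps add_divide_distrib)
    also have "\<dots> = (\<beta>\<^sup>2 + DD K a) * C * (t * rr)" unfolding ln by simp
    also have "\<dots> \<le> ((gam K a)\<^sup>2 / C\<^sup>2 + DD K a) * C * (t * rr)"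
    proof -
      have "\<beta>\<^sup>2 = g\<^sup>2 / (real n * C\<^sup>2)"
        unfolding \<beta>_def bet_def g_def LnC[unfolded L_def] using n0 C2 by (simp add: power_divide power_mult_distrib power2_eq_square field_simps)
      also have "\<dots> \<le> g\<^sup>2 / C\<^sup>2"
        using n1[OF K1 pos adm] C2 by (intro divide_left_mono) (auto simp: mult_le_cancel_right1)
      finally have "\<beta>\<^sup>2 \<le> (gam K a)\<^sup>2 / C\<^sup>2" unfolding g_def .
      then show ?thesis using C2 t0 rr0 by (intro mult_right_mono) auto
    qed
    also have "\<dots> \<le> DDD K a * (t * rr)"
    proof -
      have "0 \<le> (real K)^3 / tzero K a + C" using t0pos C2 by simp
      then have "((gam K a)\<^sup>2 / C\<^sup>2 + DD K a) * C \<le> DDD K a" unfolding D3 by simp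
      then show ?thesis using t0 rr0 by (intro mult_right_mono) auto
    qed
    finally show ?thesis using E unfolding rr_def z2_def by simp
  qed
qed

end


theorem lemma6p1:
  fixes K :: nat and a :: "nat \<Rightarrow> real"
  assumes "K \<ge> 2"
    and "\<forall>i\<in>{1..K}. (\<Sum>j=i..K. a j) > 0"
  shows "\<exists>t0 D3. t0 > 0 \<and> D3 > 0 \<and>
     (\<forall>t n x. t \<ge> t0 \<longrightarrow> admissible K a n \<longrightarrow> ranked_state K x \<longrightarrow>
        expect_at K a n x (sqrt (zhat_normsq K n x) * t) (zhat_normsq K n)
          \<le> D3 * (t * sqrt (zhat_normsq K n x)
                   + (1 + t\<^sup>2 * (zhat_normsq K n x + 1)) / real n))"
proof -
  have K1: "1 \<le> K" using assms(1) by simp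
  have pos: "\<forall>i\<in>{1..K}. (\<Sum>j=i..K. a j) > 0" using assms(2) .
  have al: "0 < alf K a" by (rule alf_pos[OF K1 pos])
  have C2: "2 \<le> C0 K a" by (rule C0_pos[OF K1])
  have g0: "0 < gam K a" unfolding gam_def using al K1 by simp
  have B0: "0 \<le> BB K a" unfolding BB_def using K1 by simp
  have tp: "0 < tzero K a"
  proof -
    have "0 < (real K)^3 + BB K a" using K1 B0 by (simp add: add_pos_nonneg)
    then show ?thesis unfolding tzero_def using g0 by simp
  qed
  have DDp: "2 \<le> DD K a"
  proof -
    have "0 \<le> 2 * gam K a * sqrt (2 * BB K a) / C0 K a" using g0 B0 C2 by simp
    then show ?thesis unfolding DD_def by simp
  qed
  have Dp: "0 < DDD K a"
  proof -
    have "0 \<le> (real K)^3 / tzero K a" using tp by simp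
    moreover have "0 \<le> ((gam K a)\<^sup>2 / (C0 K a)\<^sup>2 + DD K a) * C0 K a" using DDp C2 by simp
    ultimately show ?thesis unfolding DDD_def using C2 by linarith
  qed
  show ?thesis
  proof (intro exI conjI allI impI)
    show "0 < tzero K a" by (rule tp)
    show "0 < DDD K a" by (rule Dp)
    fix t n x
    assume t: "tzero K a \<le> t" and adm: "admissible K a n" and r: "ranked_state K x"
    have n0: "0 < real n" using adm unfolding admissible_def by simp
    have b: "expect_at K a n x (sqrt (zhat_normsq K n x) * t) (zhat_normsq K n)
         \<le> DDD K a * (t * sqrt (zhat_normsq K n x))"
      by (rule main_bound[OF K1 pos adm r t])
    have z0: "0 \<le> zhat_normsq K n x" by (rule f_nonneg[OF K1 pos adm])
    have "0 \<le> (1 + t\<^sup>2 * (zhat_normsq K n x + 1)) / real n" using z0 n0 by simp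
    then have "DDD K a * (t * sqrt (zhat_normsq K n x))
        \<le> DDD K a * (t * sqrt (zhat_normsq K n x) + (1 + t\<^sup>2 * (zhat_normsq K n x + 1)) / real n)"
      using Dp by (intro mult_left_mono) auto
    then show "expect_at K a n x (sqrt (zhat_normsq K n x) * t) (zhat_normsq K n)
          \<le> DDD K a * (t * sqrt (zhat_normsq K n x)
                   + (1 + t\<^sup>2 * (zhat_normsq K n x + 1)) / real n)"
      using b by linarith
  qed
qed

end
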